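(* Let $(a_j)_{j\in\mathbb{N}_0}$ be a complex sequence with $\sum_{j=0}^\infty|a_j|<\infty$ and let $(b_j)_{j\in\mathbb{N}_0}$ be a strictly increasing sequence of positive reals with $b_j\to\infty$. Set $b_{-1}=0$ and $$\Delta b_j=\min(b_j-b_{j-1},\,b_{j+1}-b_j),\qquad j\ge0.$$ Suppose $a_j\Delta b_j\not\to0$ as $j\to\infty$. Let $f(t)=\sum_{j=0}^\infty a_je^{i b_jt}$. Then $f$ is bounded and continuous on $\mathbb{R}$ but differentiable at no point of $\mathbb{R}$. If in addition $\sup_j|a_j|\Delta b_j=\infty$, then $f$ is not Lipschitz continuous at any $t_0\in\mathbb{R}$. The same conclusions hold for $\operatorname{Re}f$ and $\operatorname{Im}f$.
   Context: A function $g\colon\mathbb{R}\to\mathbb{C}$ is Lipschitz continuous at $t_0$ if there exist constants $L>0$, $\eta>0$ such that $|g(t)-g(t_0)|\le L|t-t_0|$ for all $t\in\,]t_0-\eta,t_0+\eta[$. *)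

theory Defs
  imports "HOL-Analysis.Analysis"
begin

definition delta_b :: "(nat \<Rightarrow> real) \<Rightarrow> nat \<Rightarrow> real" where
  "delta_b b j = min (b j - (if j = 0 then 0 else b (j - 1))) (b (Suc j) - b j)"

definition lipschitz_at :: "(real \<Rightarrow> 'a::real_normed_vector) \<Rightarrow> real \<Rightarrow> bool" where
  "lipschitz_at g t0 \<longleftrightarrow> (\<exists>L>0. \<exists>\<eta>>0. \<forall>t. t0 - \<eta> < t \<and> t < t0 + \<eta> \<longrightarrow>
       norm (g t - g t0) \<le> L * \<bar>t - t0\<bar>)"

end

theory Submission
  imports Defs "HOL-Complex_Analysis.Complex_Analysis" "HOL-Probability.Sinc_Integral"
begin


definition Sc :: "complex \<Rightarrow> complex" where
  "Sc z = (if z = 0 then 1 else sin z / z)"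

definition sincr :: "real \<Rightarrow> real" where
  "sincr x = (if x = 0 then 1 else sin x / x)"

lemma Sc_of_real: "Sc (of_real x) = of_real (sincr x)"
  by (simp add: Sc_def sincr_def sin_of_real)

lemma Sc_holo: "Sc holomorphic_on UNIV"
proof -
  have "Sc field_differentiable at z" for z
  proof (cases "z = 0")
    case True
    have "((\<lambda>z::complex. if z = 0 then 1 else sin z / z) has_field_derivative 0) (at 0)"
      using has_field_derivative_sin_z_over_z[of UNIV] by simp
    then show ?thesis using True unfolding Sc_def[abs_def] field_differentiable_def by blast
  next
    case False
    have "((\<lambda>z. sin z / z) field_differentiable at z)"
      using False by (intro field_differentiable_divide field_differentiable_at_sin field_differentiable_ident) auto
    moreover have "\<And>x'. x' \<in> UNIV \<Longrightarrow> dist x' z < norm z \<Longrightarrow> sin x' / x' = Sc x'"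
      by (auto simp: Sc_def dist_norm)
    ultimately show ?thesis
      using field_differentiable_transform_within[of "norm z" z UNIV "\<lambda>w. sin w / w" Sc] False
      by simp
  qed
  then show ?thesis by (simp add: holomorphic_on_def field_differentiable_at_within)
qed

lemma norm_sin_le: "norm (sin z) \<le> exp \<bar>Im z\<bar>"
proof -
  have eq: "sin z = (exp (\<i> * z) - exp (- (\<i> * z))) / (2 * \<i>)" by (simp add: sin_exp_eq)
  have n2: "norm (2 * \<i>) = 2" by (simp add: norm_mult)
  have "norm (sin z) = norm (exp (\<i> * z) - exp (- (\<i> * z))) / norm (2 * \<i>)"
    by (metis eq norm_divide)
  also have "\<dots> \<le> (norm (exp (\<i> * z)) + norm (exp (- (\<i> * z)))) / 2"
    unfolding n2 using norm_triangle_ineq4[of "exp (\<i> * z)" "exp (- (\<i> * z))"] by simp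
  also have "\<dots> = (exp (- Im z) + exp (Im z)) / 2" by (simp add: norm_exp_eq_Re)
  also have "\<dots> \<le> exp \<bar>Im z\<bar>" by (cases "Im z \<ge> 0") auto
  finally show ?thesis .
qed

lemma norm_Sc_le: "z \<noteq> 0 \<Longrightarrow> norm (Sc z) \<le> exp \<bar>Im z\<bar> / norm z"
  by (simp add: Sc_def norm_divide divide_right_mono norm_sin_le)

lemma abs_sincr_le1: "\<bar>sincr x\<bar> \<le> 1"
  by (simp add: sincr_def abs_sin_x_le_abs_x abs_divide)

lemma abs_sincr_le2: "x \<noteq> 0 \<Longrightarrow> \<bar>sincr x\<bar> \<le> 1 / \<bar>x\<bar>"
  by (simp add: sincr_def abs_divide divide_right_mono)

lemma continuous_sincr: "continuous_on UNIV sincr"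
proof -
  have "continuous_on UNIV (\<lambda>x. Re (Sc (of_real x)))"
    using Sc_holo by (intro continuous_intros holomorphic_on_imp_continuous_on
        continuous_on_compose2[of UNIV Sc]) auto
  then show ?thesis by (simp add: Sc_of_real)
qed

lemma sincr_weight_bound:
  assumes "k \<le> 2"
  shows "\<bar>x\<bar>^k * (sincr x)^4 \<le> 2 / (1 + x^2)"
proof (cases "\<bar>x\<bar> \<le> 1")
  case True
  have h1: "\<bar>x\<bar>^k \<le> 1" using True by (simp add: power_le_one)
  have "\<bar>sincr x\<bar>^4 \<le> 1" using abs_sincr_le1[of x] by (intro power_le_one) auto
  then have h2: "(sincr x)^4 \<le> 1" by (simp add: power_even_abs_numeral)
  have "x^2 \<le> 1" using True by (simp add: abs_square_le_1)
  moreover have "0 < 1 + x^2" by (simp add: add_pos_nonneg)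
  ultimately have h3: "1 \<le> 2 / (1 + x^2)" by (simp add: le_divide_eq)
  have h4: "0 \<le> (sincr x)^4" by (simp add: zero_le_even_power)
  have "\<bar>x\<bar>^k * (sincr x)^4 \<le> 1" using h1 h2 h4 by (intro mult_le_one) auto
  with h3 show ?thesis by linarith
next
  case False
  then have x0: "x \<noteq> 0" and x1: "1 < \<bar>x\<bar>" by auto
  have "\<bar>sincr x\<bar>^4 \<le> (1/\<bar>x\<bar>)^4" using abs_sincr_le2[OF x0] by (intro power_mono) auto
  then have s4: "(sincr x)^4 \<le> 1 / \<bar>x\<bar>^4" by (simp add: power_abs power_divide)
  have "\<bar>x\<bar>^k \<le> \<bar>x\<bar>^2" using x1 assms by (intro power_increasing) auto
  then have "\<bar>x\<bar>^k * (sincr x)^4 \<le> \<bar>x\<bar>^2 * (1 / \<bar>x\<bar>^4)"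
    using s4 by (intro mult_mono) auto
  also have "\<dots> = 1 / x^2" using x0 by (simp add: power_abs field_simps power2_eq_square eval_nat_numeral)
  also have "\<dots> \<le> 2 / (1 + x^2)"
  proof -
    have "1 \<le> x^2" using x1 by (metis abs_le_square_iff abs_one less_imp_le one_power2)
    moreover have "0 < 1 + x^2" by (simp add: add_pos_nonneg)
    moreover have "0 < x^2" using x0 by simp
    ultimately show ?thesis by (simp add: field_simps)
  qed
  finally show ?thesis .
qed



lemma seg_bound:
  assumes bnd: "\<And>z. 0 \<le> Im z \<Longrightarrow> 1 \<le> norm z \<Longrightarrow> norm (G z) \<le> C / (norm z)^2"
    and C0: "0 \<le> C" and R1: "1 \<le> R"
    and z: "0 \<le> Im z" "R \<le> norm z"
  shows "norm (G z) \<le> C / R^2"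
proof -
  have "norm (G z) \<le> C / (norm z)^2" using bnd z R1 by auto
  also have "\<dots> \<le> C / R^2" using C0 R1 z
    by (intro divide_left_mono power_mono mult_pos_pos) auto
  finally show ?thesis .
qed

lemma contour_vanish:
  fixes G :: "complex \<Rightarrow> complex" and C :: real
  assumes holo: "G holomorphic_on UNIV"
    and bnd: "\<And>z. 0 \<le> Im z \<Longrightarrow> 1 \<le> norm z \<Longrightarrow> norm (G z) \<le> C / (norm z)^2"
    and int: "integrable lborel (\<lambda>x. G (of_real x))"
  shows "integral\<^sup>L lborel (\<lambda>x. G (of_real x)) = 0"
proof -
  have "norm (G 1) \<le> C" using bnd[of 1] by simp
  then have C0: "0 \<le> C" using norm_ge_zero[of "G 1"] by linarith
  have A: "norm (integral {-R..R} (\<lambda>x. G (of_real x))) \<le> 4 * C / R" if R1: "1 \<le> R" for R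
  proof -
    define p1 where "p1 = complex_of_real (-R)"
    define p2 where "p2 = complex_of_real R"
    define p3 where "p3 = Complex R R"
    define p4 where "p4 = Complex (-R) R"
    have ci: "(G has_contour_integral contour_integral (linepath a b) G) (linepath a b)" for a b
      by (intro has_contour_integral_integral contour_integrable_holomorphic_simple[OF holo open_UNIV])
         auto
    define i1 where "i1 = contour_integral (linepath p1 p2) G"
    define i2 where "i2 = contour_integral (linepath p2 p3) G"
    define i3 where "i3 = contour_integral (linepath p3 p4) G"
    define i4 where "i4 = contour_integral (linepath p4 p1) G"
    have "(G has_contour_integral (i1 + (i2 + (i3 + i4))))
            (linepath p1 p2 +++ (linepath p2 p3 +++ (linepath p3 p4 +++ linepath p4 p1)))"
      unfolding i1_def i2_def i3_def i4_def
      by (intro has_contour_integral_join ci valid_path_join valid_path_linepath) auto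
    moreover have "(G has_contour_integral 0)
            (linepath p1 p2 +++ (linepath p2 p3 +++ (linepath p3 p4 +++ linepath p4 p1)))"
      by (intro Cauchy_theorem_convex_simple[OF holo] valid_path_join valid_path_linepath) auto
    ultimately have sum0: "i1 + (i2 + (i3 + i4)) = 0" by (rule has_contour_integral_unique)
    have Rpos: "0 < R" using R1 by simp
    have b2: "norm i2 \<le> C / R^2 * R"
    proof -
      have "norm i2 \<le> C / R^2 * norm (p3 - p2)"
        unfolding i2_def
      proof (rule has_contour_integral_bound_linepath[OF ci])
        show "0 \<le> C / R^2" using C0 by simp
        fix z assume "z \<in> closed_segment p2 p3"
        then obtain u where u: "0 \<le> u" "u \<le> 1" "z = (1 - u) *\<^sub>R p2 + u *\<^sub>R p3"
          by (auto simp: in_segment)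
        have zz: "Re z = R" "Im z = u * R" unfolding u(3) p2_def p3_def by (simp_all add: algebra_simps)
        have zR: "R \<le> norm z" using abs_Re_le_cmod[of z] zz by simp
        have z0: "0 \<le> Im z" using zz u Rpos by simp
        show "norm (G z) \<le> C / R^2" by (rule seg_bound[OF bnd C0 R1 z0 zR])
      qed
      also have "norm (p3 - p2) = R"
      proof -
        have "p3 - p2 = Complex 0 R" by (simp add: p2_def p3_def complex_eq_iff)
        then show ?thesis using Rpos by (simp add: cmod_def)
      qed
      finally show ?thesis .
    qed
    have b3: "norm i3 \<le> C / R^2 * (2 * R)"
    proof -
      have "norm i3 \<le> C / R^2 * norm (p4 - p3)"
        unfolding i3_def
      proof (rule has_contour_integral_bound_linepath[OF ci])
        show "0 \<le> C / R^2" using C0 by simp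
        fix z assume "z \<in> closed_segment p3 p4"
        then obtain u where u: "0 \<le> u" "u \<le> 1" "z = (1 - u) *\<^sub>R p3 + u *\<^sub>R p4"
          by (auto simp: in_segment)
        have zz: "Im z = R" unfolding u(3) p4_def p3_def by (simp_all add: algebra_simps)
        have zR: "R \<le> norm z" using abs_Im_le_cmod[of z] zz Rpos by simp
        have z0: "0 \<le> Im z" using zz u Rpos by simp
        show "norm (G z) \<le> C / R^2" by (rule seg_bound[OF bnd C0 R1 z0 zR])
      qed
      also have "norm (p4 - p3) = 2 * R"
      proof -
        have "p4 - p3 = Complex (-2*R) 0" by (simp add: p4_def p3_def complex_eq_iff)
        moreover have "sqrt (4 * R^2) = 2 * R" using Rpos
        proof -
          have "4 * R^2 = (2 * R)^2" by (simp add: power2_eq_square)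
          then show ?thesis using Rpos by (simp only: real_sqrt_abs)
        qed
        ultimately show ?thesis by (simp add: cmod_def)
      qed
      finally show ?thesis .
    qed
    have b4: "norm i4 \<le> C / R^2 * R"
    proof -
      have "norm i4 \<le> C / R^2 * norm (p1 - p4)"
        unfolding i4_def
      proof (rule has_contour_integral_bound_linepath[OF ci])
        show "0 \<le> C / R^2" using C0 by simp
        fix z assume "z \<in> closed_segment p4 p1"
        then obtain u where u: "0 \<le> u" "u \<le> 1" "z = (1 - u) *\<^sub>R p4 + u *\<^sub>R p1"
          by (auto simp: in_segment)
        have zz: "Re z = - R" "Im z = (1 - u) * R" unfolding u(3) p4_def p1_def by (simp_all add: algebra_simps)
        have zR: "R \<le> norm z" using abs_Re_le_cmod[of z] zz Rpos by simp
        have z0: "0 \<le> Im z" using zz u Rpos by simp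
        show "norm (G z) \<le> C / R^2" by (rule seg_bound[OF bnd C0 R1 z0 zR])
      qed
      also have "norm (p1 - p4) = R"
      proof -
        have "p1 - p4 = Complex 0 (-R)" by (simp add: p4_def p1_def complex_eq_iff)
        then show ?thesis using Rpos by (simp add: cmod_def)
      qed
      finally show ?thesis .
    qed
    have "i1 = - (i2 + i3 + i4)" using sum0 by (simp add: algebra_simps eq_neg_iff_add_eq_0)
    then have "norm i1 = norm (i2 + i3 + i4)" by (simp only: norm_minus_cancel)
    also have "\<dots> \<le> norm (i2 + i3) + norm i4" by (rule norm_triangle_ineq)
    also have "\<dots> \<le> norm i2 + norm i3 + norm i4" using norm_triangle_ineq[of i2 i3] by simp
    finally have "norm i1 \<le> norm i2 + norm i3 + norm i4" .
    also have "\<dots> \<le> C / R^2 * R + C / R^2 * (2 * R) + C / R^2 * R" using b2 b3 b4 by linarith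
    also have "\<dots> = 4 * C / R" using Rpos by (simp add: field_simps power2_eq_square)
    finally have "norm i1 \<le> 4 * C / R" .
    moreover have "i1 = integral {-R..R} (\<lambda>x. G (of_real x))"
      unfolding i1_def p1_def p2_def using Rpos
      by (subst contour_integral_linepath_Reals_eq) auto
    ultimately show ?thesis by simp
  qed
  define s where "s R x = indicator {-R..R} x *\<^sub>R G (of_real x)" for R x
  have meas: "(\<lambda>x. G (of_real x)) \<in> borel_measurable lborel" using int by auto
  have sint: "integrable lborel (s R)" for R
    unfolding s_def by (intro integrable_mult_indicator int) auto
  have eqR: "integral\<^sup>L lborel (s R) = integral {-R..R} (\<lambda>x. G (of_real x))" for R
  proof -
    have "set_integrable lborel {-R..R} (\<lambda>x. G (of_real x))"
      using sint[of R] unfolding set_integrable_def s_def by simp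
    moreover have "s R = (\<lambda>x. indicator {-R..R} x *\<^sub>R G (of_real x))" by (simp add: s_def fun_eq_iff)
    ultimately show ?thesis using set_borel_integral_eq_integral(2)
      by (simp add: set_lebesgue_integral_def)
  qed
  have lim: "((\<lambda>R. integral\<^sup>L lborel (s R)) \<longlongrightarrow> integral\<^sup>L lborel (\<lambda>x. G (of_real x))) at_top"
  proof (rule integral_dominated_convergence_at_top[where w="\<lambda>x. norm (G (of_real x))"])
    show "(\<lambda>x. G (of_real x)) \<in> borel_measurable lborel" by (rule meas)
    show "s t \<in> borel_measurable lborel" for t using sint[of t] by auto
    show "integrable lborel (\<lambda>x. norm (G (of_real x)))" using int by auto
    show "AE x in lborel. ((\<lambda>i. s i x) \<longlongrightarrow> G (of_real x)) at_top"
    proof (rule AE_I2)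
      fix x :: real
      have "eventually (\<lambda>i. s i x = G (of_real x)) at_top"
        using eventually_ge_at_top[of "\<bar>x\<bar>"] by eventually_elim (simp add: s_def indicator_def abs_le_iff)
      then show "((\<lambda>i. s i x) \<longlongrightarrow> G (of_real x)) at_top" by (rule tendsto_eventually)
    qed
    show "\<forall>\<^sub>F i in at_top. AE x in lborel. norm (s i x) \<le> norm (G (of_real x))"
      by (intro always_eventually allI AE_I2) (simp add: s_def indicator_def)
  qed
  have lim0: "((\<lambda>R. integral\<^sup>L lborel (s R)) \<longlongrightarrow> 0) at_top"
  proof (rule Lim_null_comparison)
    show "eventually (\<lambda>R. norm (integral\<^sup>L lborel (s R)) \<le> 4 * C / R) at_top"
      using eventually_ge_at_top[of 1] by eventually_elim (simp add: eqR A)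
    show "((\<lambda>R. 4 * C / R) \<longlongrightarrow> 0) at_top"
      by (intro tendsto_divide_0[OF tendsto_const] filterlim_at_top_imp_at_infinity[OF filterlim_ident])
  qed
  show ?thesis using tendsto_unique[OF _ lim lim0] by simp
qed



lemma sincr_meas[measurable]: "sincr \<in> borel_measurable borel"
  by (rule borel_measurable_continuous_onI[OF continuous_sincr])

lemma int_inv: "integrable lborel (\<lambda>x::real. inverse (1 + x^2))"
  using integrable_inverse_1_plus_square
  by (simp add: set_integrable_def einterval_eq_UNIV)

lemma int_inv_c: "c \<noteq> 0 \<Longrightarrow> integrable lborel (\<lambda>x::real. inverse (1 + (c * x)^2))"
  using lborel_integrable_real_affine[OF int_inv, of c 0] by simp

lemma weight_bound_c:
  assumes c: "0 < c" and k: "k \<le> 2"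
  shows "\<bar>s\<bar>^k * (sincr (c * s))^4 \<le> (2 / c^k) * inverse (1 + (c * s)^2)"
proof -
  have h0: "\<bar>c * s\<bar>^k * (sincr (c * s))^4 \<le> 2 / (1 + (c * s)^2)" by (rule sincr_weight_bound[OF k])
  have h1: "\<bar>c * s\<bar>^k = c^k * \<bar>s\<bar>^k" using c by (simp add: abs_mult power_mult_distrib)
  have h: "c^k * (\<bar>s\<bar>^k * (sincr (c * s))^4) \<le> 2 / (1 + (c * s)^2)" using h0 unfolding h1 by (simp add: mult.assoc)
  have cp: "0 < c^k" using c by simp
  have "\<bar>s\<bar>^k * (sincr (c * s))^4 = (c^k * (\<bar>s\<bar>^k * (sincr (c * s))^4)) / c^k"
    by (rule nonzero_mult_div_cancel_left[symmetric]) (use c in simp)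
  also have "\<dots> \<le> (2 / (1 + (c * s)^2)) / c^k" using cp h by (intro divide_right_mono) auto
  also have "\<dots> = (2 / c^k) * inverse (1 + (c * s)^2)" by (simp add: divide_inverse mult_ac)
  finally show ?thesis .
qed

lemma Sc_of_real_mult: "Sc (of_real c * of_real s) = of_real (sincr (c * s))"
  by (metis of_real_mult Sc_of_real)

lemma Sc_holo_comp: "f holomorphic_on A \<Longrightarrow> (\<lambda>z. Sc (f z)) holomorphic_on A"
  using holomorphic_on_compose_gen[of f A Sc UNIV] Sc_holo by (simp add: o_def)

lemma dom_int:
  fixes h :: "real \<Rightarrow> 'a::{banach, second_countable_topology}"
  assumes c: "0 < c" and k: "k \<le> 2" and hm: "h \<in> borel_measurable lborel"
    and hb: "\<And>s. norm (h s) \<le> B * (\<bar>s\<bar>^k * (sincr (c * s))^4)"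
  shows "integrable lborel h"
proof (rule Bochner_Integration.integrable_bound[OF _ hm])
  show "integrable lborel (\<lambda>s. \<bar>B\<bar> * (2 / c^k) * inverse (1 + (c * s)^2))"
    using int_inv_c[of c] c by simp
  show "AE s in lborel. norm (h s) \<le> norm (\<bar>B\<bar> * (2 / c^k) * inverse (1 + (c * s)^2))"
  proof (rule AE_I2)
    fix s
    have nn: "0 \<le> \<bar>s\<bar>^k * (sincr (c * s))^4" by (simp add: zero_le_even_power)
    have "norm (h s) \<le> B * (\<bar>s\<bar>^k * (sincr (c * s))^4)" by (rule hb)
    also have "\<dots> \<le> \<bar>B\<bar> * (\<bar>s\<bar>^k * (sincr (c * s))^4)" using nn by (intro mult_right_mono) auto
    also have "\<dots> \<le> \<bar>B\<bar> * ((2 / c^k) * inverse (1 + (c * s)^2))"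
      by (intro mult_left_mono weight_bound_c[OF c k]) auto
    also have "\<dots> = norm (\<bar>B\<bar> * (2 / c^k) * inverse (1 + (c * s)^2))"
      using c by (simp add: abs_mult add_pos_nonneg mult.assoc)
    finally show "norm (h s) \<le> norm (\<bar>B\<bar> * (2 / c^k) * inverse (1 + (c * s)^2))" .
  qed
qed

lemma kern_int:
  assumes c: "0 < c" and k: "k \<le> 2"
  shows "integrable lborel (\<lambda>s. complex_of_real (s^k * (sincr (c * s))^4) * exp (\<i> * complex_of_real (\<beta> * s)))"
proof (rule dom_int[OF c k, where B=1])
  show "(\<lambda>s. complex_of_real (s^k * (sincr (c * s))^4) * exp (\<i> * complex_of_real (\<beta> * s))) \<in> borel_measurable lborel"
    by measurable
  fix s
  have "norm (exp (\<i> * complex_of_real (\<beta> * s))) = 1" by (simp add: norm_exp_eq_Re)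
  then show "norm (complex_of_real (s^k * (sincr (c * s))^4) * exp (\<i> * complex_of_real (\<beta> * s)))
      \<le> 1 * (\<bar>s\<bar>^k * (sincr (c * s))^4)"
    by (simp add: norm_mult norm_power abs_mult power_abs zero_le_even_power)
qed

lemma T_zero_pos:
  assumes c: "0 < c" and k: "k \<le> 1" and \<beta>: "4 * c \<le> \<beta>"
  shows "integral\<^sup>L lborel (\<lambda>s. complex_of_real (s^k * (sincr (c * s))^4) * exp (\<i> * complex_of_real (\<beta> * s))) = 0"
proof -
  define G where "G z = z^k * Sc (of_real c * z)^4 * exp (\<i> * of_real \<beta> * z)" for z
  have eq: "G (of_real s) = complex_of_real (s^k * (sincr (c * s))^4) * exp (\<i> * complex_of_real (\<beta> * s))" for s
    unfolding G_def by (simp add: Sc_of_real_mult mult.assoc)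
  have "integral\<^sup>L lborel (\<lambda>s. G (of_real s)) = 0"
  proof (rule contour_vanish[where C="1 / c^4"])
    show "G holomorphic_on UNIV" unfolding G_def
      by (intro holomorphic_intros Sc_holo_comp)
    show "integrable lborel (\<lambda>x. G (complex_of_real x))"
      unfolding eq using kern_int[OF c] k by simp
    fix z :: complex assume y: "0 \<le> Im z" and z1: "1 \<le> norm z"
    define y where "y = Im z"
    have z0: "z \<noteq> 0" using z1 by auto
    have w0: "of_real c * z \<noteq> 0" using z0 c by simp
    have nw: "norm (of_real c * z) = c * norm z" using c by (simp add: norm_mult)
    have "norm (Sc (of_real c * z)) \<le> exp \<bar>Im (of_real c * z)\<bar> / norm (of_real c * z)"
      by (rule norm_Sc_le[OF w0])
    also have "\<dots> = exp (c * y) / (c * norm z)" using c y by (simp add: nw y_def abs_mult)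
    finally have sb: "norm (Sc (of_real c * z)) \<le> exp (c * y) / (c * norm z)" .
    have "norm (Sc (of_real c * z)^4) \<le> (exp (c * y) / (c * norm z))^4"
      unfolding norm_power by (intro power_mono sb) auto
    also have "\<dots> = exp (4 * (c * y)) / (c^4 * norm z^4)"
      by (simp add: power_divide power_mult_distrib exp_of_nat_mult[of 4, symmetric])
    finally have sb4: "norm (Sc (of_real c * z)^4) \<le> exp (4 * (c * y)) / (c^4 * norm z^4)" .
    have ne: "norm (exp (\<i> * of_real \<beta> * z)) = exp (- (\<beta> * y))" by (simp add: norm_exp_eq_Re y_def)
    have "norm (G z) = norm z^k * norm (Sc (of_real c * z)^4) * exp (- (\<beta> * y))"
      unfolding G_def by (simp add: norm_mult norm_power norm_exp_eq_Re y_def)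
    also have "\<dots> \<le> norm z^k * (exp (4 * (c * y)) / (c^4 * norm z^4)) * exp (- (\<beta> * y))"
      by (intro mult_right_mono mult_left_mono sb4) auto
    also have "\<dots> = norm z^k * exp (4 * (c * y) - \<beta> * y) / (c^4 * norm z^4)"
      by (simp add: exp_diff exp_minus field_simps)
    also have "\<dots> \<le> norm z^k * 1 / (c^4 * norm z^4)"
    proof -
      have "4 * (c * y) - \<beta> * y \<le> 0" using \<beta> y y_def
        by (metis diff_ge_0_iff_ge mult.assoc mult_right_mono neg_le_0_iff_le minus_diff_eq)
      then have "exp (4 * (c * y) - \<beta> * y) \<le> 1" by simp
      then show ?thesis using c z0 by (intro divide_right_mono mult_left_mono) auto
    qed
    also have "\<dots> \<le> norm z^2 / (c^4 * norm z^4)"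
    proof -
      have "norm z ^ k \<le> norm z ^ 2" by (rule power_increasing) (use k z1 in auto)
      then show ?thesis using c by (intro divide_right_mono) auto
    qed
    also have "\<dots> = (1 / c^4) / (norm z)^2" using z0 by (simp add: field_simps eval_nat_numeral)
    finally show "norm (G z) \<le> (1 / c^4) / (norm z)^2" .
  qed
  then show ?thesis by (simp add: eq)
qed

lemma T_zero:
  assumes c: "0 < c" and k: "k \<le> 1" and \<beta>: "4 * c \<le> \<bar>\<beta>\<bar>"
  shows "integral\<^sup>L lborel (\<lambda>s. complex_of_real (s^k * (sincr (c * s))^4) * exp (\<i> * complex_of_real (\<beta> * s))) = 0"
proof (cases "0 \<le> \<beta>")
  case True
  then show ?thesis using T_zero_pos[OF c k] \<beta> by simp
next
  case False
  have "integral\<^sup>L lborel (\<lambda>s. complex_of_real (s^k * (sincr (c * s))^4) * exp (\<i> * complex_of_real (\<beta> * s)))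
      = integral\<^sup>L lborel (\<lambda>s. cnj (complex_of_real (s^k * (sincr (c * s))^4) * exp (\<i> * complex_of_real ((-\<beta>) * s))))"
  proof -
    have pt: "complex_of_real (s^k * (sincr (c * s))^4) * exp (\<i> * complex_of_real (\<beta> * s))
      = cnj (complex_of_real (s^k * (sincr (c * s))^4) * exp (\<i> * complex_of_real ((-\<beta>) * s)))" for s
      by (simp add: exp_cnj)
    show ?thesis by (simp only: pt)
  qed
  also have "\<dots> = cnj (integral\<^sup>L lborel (\<lambda>s. complex_of_real (s^k * (sincr (c * s))^4) * exp (\<i> * complex_of_real ((-\<beta>) * s))))"
    by (rule Bochner_Integration.integral_cnj)
  also have "\<dots> = 0" using T_zero_pos[OF c k, of "-\<beta>"] \<beta> False by simp
  finally show ?thesis .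
qed



definition Jk :: "nat \<Rightarrow> real" where
  "Jk k = integral\<^sup>L lborel (\<lambda>x. \<bar>x\<bar>^k * (sincr x)^4)"

lemma int_weight: "0 < c \<Longrightarrow> k \<le> 2 \<Longrightarrow> integrable lborel (\<lambda>s. \<bar>s\<bar>^k * (sincr (c * s))^4)"
  by (rule dom_int[where B=1]) (auto simp: abs_mult power_abs zero_le_even_power)

lemma Jk_scale:
  assumes c: "0 < c" and k: "k \<le> 2"
  shows "integral\<^sup>L lborel (\<lambda>s. \<bar>s\<bar>^k * (sincr (c * s))^4) = Jk k / c^(k+1)"
proof -
  have "Jk k = \<bar>c\<bar> *\<^sub>R integral\<^sup>L lborel (\<lambda>x. \<bar>0 + c * x\<bar>^k * (sincr (0 + c * x))^4)"
    unfolding Jk_def using c by (intro lborel_integral_real_affine) auto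
  also have "(\<lambda>x. \<bar>0 + c * x\<bar>^k * (sincr (0 + c * x))^4) = (\<lambda>x. c^k * (\<bar>x\<bar>^k * (sincr (c * x))^4))"
    using c by (simp add: abs_mult power_mult_distrib fun_eq_iff)
  also have "integral\<^sup>L lborel \<dots> = c^k * integral\<^sup>L lborel (\<lambda>x. \<bar>x\<bar>^k * (sincr (c * x))^4)"
    by (rule integral_mult_right_zero)
  finally have "Jk k = c^(k+1) * integral\<^sup>L lborel (\<lambda>x. \<bar>x\<bar>^k * (sincr (c * x))^4)"
    using c by simp
  then show ?thesis using c by (simp add: field_simps)
qed

lemma J0_pos: "0 < Jk 0"
proof -
  have "isCont sincr 0" using continuous_sincr by (simp add: continuous_on_eq_continuous_at)
  then have "(sincr \<longlongrightarrow> 1) (at 0)" by (simp add: isCont_def sincr_def)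
  then have "eventually (\<lambda>x. dist (sincr x) 1 < 1/2) (at 0)" using tendsto_iff[THEN iffD1, rule_format, of sincr 1 "at 0" "1/2"] by simp
  then obtain d where d: "0 < d" "\<And>x. x \<noteq> 0 \<Longrightarrow> dist x 0 < d \<Longrightarrow> dist (sincr x) 1 < 1/2"
    unfolding eventually_at by auto
  have lb: "(1/16) * indicator {-(d/2)..d/2} x \<le> (sincr x)^4" for x
  proof (cases "x \<in> {-(d/2)..d/2}")
    case True
    have "1/2 \<le> sincr x"
    proof (cases "x = 0")
      case True then show ?thesis by (simp add: sincr_def)
    next
      case False
      then have "dist (sincr x) 1 < 1/2" using d True by (intro d(2)) (auto simp: dist_real_def)
      then show ?thesis unfolding dist_real_def by arith
    qed
    then have "(1/2)^4 \<le> (sincr x)^4" by (intro power_mono) auto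
    then have h: "1/16 \<le> (sincr x)^4" by (simp add: power_divide)
    have ind: "indicator {-(d/2)..d/2} x = (1::real)" using True by simp
    show ?thesis using h unfolding ind by simp
  next
    case False then show ?thesis by (simp add: zero_le_even_power)
  qed
  have "0 < (1/16) * d" using d by simp
  also have "(1/16) * d = integral\<^sup>L lborel (\<lambda>x. (1/16) * indicator {-(d/2)..d/2} x)"
    using d by simp
  also have "\<dots> \<le> Jk 0" unfolding Jk_def
  proof (rule integral_mono)
    show "integrable lborel (\<lambda>x. (1/16) * indicator {-(d/2)..d/2} x :: real)"
      by (intro integrable_mult_right) (simp add: integrable_indicator_iff emeasure_lborel_Icc_eq)
    show "integrable lborel (\<lambda>x. \<bar>x\<bar>^0 * (sincr x)^4)" using int_weight[of 1 0] by simp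
  qed (use lb in simp)
  finally show ?thesis .
qed

lemma Jk_nonneg: "0 \<le> Jk k"
  unfolding Jk_def by (intro integral_nonneg_AE AE_I2) (simp add: zero_le_even_power)



lemma exp_comb:
  "exp (\<i> * complex_of_real (x * (t + s))) * exp (\<i> * complex_of_real (y * s))
   = exp (\<i> * complex_of_real (x * t)) * exp (\<i> * complex_of_real ((x + y) * s))"
proof -
  have "\<i> * complex_of_real (x * (t + s)) + \<i> * complex_of_real (y * s)
      = \<i> * complex_of_real (x * t) + \<i> * complex_of_real ((x + y) * s)"
    by (simp add: algebra_simps)
  then show ?thesis by (metis exp_add)
qed

lemma ring_aux:
  fixes P Q E1 E2 Ej K X Y Z W :: complex
  assumes "E1 * Ej = X * Y" "E2 * Ej = Z * W"
  shows "(P * E1 + Q * E2) * (K * Ej) = P * X * (K * Y) + Q * Z * (K * W)"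
proof -
  have "(P * E1 + Q * E2) * (K * Ej) = P * K * (E1 * Ej) + Q * K * (E2 * Ej)" by (simp add: algebra_simps)
  also have "\<dots> = P * K * (X * Y) + Q * K * (Z * W)" by (simp only: assms)
  also have "\<dots> = P * X * (K * Y) + Q * Z * (K * W)" by (simp add: algebra_simps)
  finally show ?thesis .
qed

lemma norm_exp_i: "norm (exp (\<i> * complex_of_real x)) = 1"
  by (simp add: norm_exp_eq_Re)

lemma key_identity:
  fixes p q :: "nat \<Rightarrow> complex" and b :: "nat \<Rightarrow> real" and F :: "real \<Rightarrow> complex"
  assumes c: "0 < c"
    and sp: "summable (\<lambda>k. norm (p k))" and sq: "summable (\<lambda>k. norm (q k))"
    and gap: "\<And>k. k \<noteq> j \<Longrightarrow> 4 * c \<le> \<bar>b k - b j\<bar>"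
    and gap2: "\<And>k. 4 * c \<le> \<bar>b k + b j\<bar>"
    and gapj: "4 * c \<le> \<bar>b j\<bar>"
    and Fdef: "\<And>t. F t = (\<Sum>k. p k * exp (\<i> * of_real (b k * t)) + q k * exp (\<i> * of_real (- b k * t)))"
  shows "integral\<^sup>L lborel (\<lambda>s. (F (t0 + s) - F t0 - A * of_real s) *
            (of_real ((sincr (c * s))^4) * exp (\<i> * of_real (- b j * s))))
         = p j * exp (\<i> * of_real (b j * t0)) * of_real (Jk 0 / c)"
proof -
  define \<kappa> where "\<kappa> \<beta> s = complex_of_real ((sincr (c * s))^4) * exp (\<i> * complex_of_real (\<beta> * s))" for \<beta> s
  have Tint: "integrable lborel (\<kappa> \<beta>)" for \<beta>
    using kern_int[OF c, of 0 \<beta>] by (simp add: \<kappa>_def[abs_def])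
  have Tz: "integral\<^sup>L lborel (\<kappa> \<beta>) = 0" if "4 * c \<le> \<bar>\<beta>\<bar>" for \<beta>
    using T_zero[OF c, of 0 \<beta>] that by (simp add: \<kappa>_def[abs_def])
  have T1int: "integrable lborel (\<lambda>s. complex_of_real (s * (sincr (c * s))^4) * exp (\<i> * complex_of_real (\<beta> * s)))" for \<beta>
    using kern_int[OF c, of 1 \<beta>] by simp
  have T1z: "integral\<^sup>L lborel (\<lambda>s. complex_of_real (s * (sincr (c * s))^4) * exp (\<i> * complex_of_real (\<beta> * s))) = 0"
    if "4 * c \<le> \<bar>\<beta>\<bar>" for \<beta>
    using T_zero[OF c, of 1 \<beta>] that by simp
  have T0: "integral\<^sup>L lborel (\<kappa> 0) = of_real (Jk 0 / c)"
  proof -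
    have "integral\<^sup>L lborel (\<kappa> 0) = integral\<^sup>L lborel (\<lambda>s. complex_of_real (\<bar>s\<bar>^0 * (sincr (c * s))^4))"
      by (simp add: \<kappa>_def[abs_def])
    also have "\<dots> = of_real (integral\<^sup>L lborel (\<lambda>s. \<bar>s\<bar>^0 * (sincr (c * s))^4))"
      by (rule Bochner_Integration.integral_complex_of_real)
    also have "\<dots> = of_real (Jk 0 / c)" by (subst Jk_scale[OF c]) simp_all
    finally show ?thesis .
  qed
  have nk: "norm (\<kappa> \<beta> s) = (sincr (c * s))^4" for \<beta> s
    by (simp add: \<kappa>_def norm_mult norm_power norm_exp_i power_even_abs_numeral)
  define w where "w k t = p k * exp (\<i> * of_real (b k * t)) + q k * exp (\<i> * of_real (- b k * t))" for k t
  have wb: "norm (w k t) \<le> norm (p k) + norm (q k)" for k t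
  proof -
    have "norm (w k t) \<le> norm (p k * exp (\<i> * of_real (b k * t))) + norm (q k * exp (\<i> * of_real (- b k * t)))"
      unfolding w_def by (rule norm_triangle_ineq)
    also have "\<dots> = norm (p k) + norm (q k)" by (simp add: norm_mult norm_exp_i)
    finally show ?thesis .
  qed
  have spq: "summable (\<lambda>k. norm (p k) + norm (q k))" using sp sq by (rule summable_add)
  have wsum: "summable (\<lambda>k. w k t)" for t
    by (rule summable_comparison_test'[OF spq]) (use wb in auto)
  define u where "u k s = p k * exp (\<i> * of_real (b k * t0)) * \<kappa> (b k - b j) s
      + q k * exp (\<i> * of_real (- b k * t0)) * \<kappa> (- b k - b j) s" for k s
  have wu: "w k (t0 + s) * \<kappa> (- b j) s = u k s" for k s
  proof -
    have e1: "exp (\<i> * of_real (b k * (t0 + s))) * exp (\<i> * of_real (- b j * s))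
        = exp (\<i> * of_real (b k * t0)) * exp (\<i> * of_real ((b k - b j) * s))"
      using exp_comb[of "b k" t0 s "- b j"] by (simp only: diff_conv_add_uminus)
    have e2: "exp (\<i> * of_real (- b k * (t0 + s))) * exp (\<i> * of_real (- b j * s))
        = exp (\<i> * of_real (- b k * t0)) * exp (\<i> * of_real ((- b k - b j) * s))"
      using exp_comb[of "- b k" t0 s "- b j"] by (simp only: diff_conv_add_uminus)
    show ?thesis
      unfolding w_def u_def \<kappa>_def by (rule ring_aux[OF e1 e2])
  qed
  have Fser: "F (t0 + s) * \<kappa> (- b j) s = (\<Sum>k. u k s)" for s
  proof -
    have "F (t0 + s) = (\<Sum>k. w k (t0 + s))" unfolding Fdef w_def ..
    then have "F (t0 + s) * \<kappa> (- b j) s = (\<Sum>k. w k (t0 + s) * \<kappa> (- b j) s)"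
      using suminf_mult2[OF wsum] by simp
    then show ?thesis by (simp add: wu)
  qed
  have uint: "integrable lborel (u k)" for k
    unfolding u_def[abs_def] by (intro Bochner_Integration.integrable_add integrable_mult_right Tint)
  have ub: "norm (u k s) \<le> (norm (p k) + norm (q k)) * (sincr (c * s))^4" for k s
  proof -
    have "norm (u k s) \<le> norm (p k * exp (\<i> * of_real (b k * t0)) * \<kappa> (b k - b j) s)
        + norm (q k * exp (\<i> * of_real (- b k * t0)) * \<kappa> (- b k - b j) s)"
      unfolding u_def by (rule norm_triangle_ineq)
    also have "\<dots> = (norm (p k) + norm (q k)) * (sincr (c * s))^4"
      by (simp add: norm_mult norm_exp_i nk algebra_simps)
    finally show ?thesis .
  qed
  have int0: "integrable lborel (\<lambda>s. (sincr (c * s))^4)" using int_weight[OF c, of 0] by simp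
  have ui: "integral\<^sup>L lborel (\<lambda>s. norm (u k s)) \<le> (norm (p k) + norm (q k)) * (Jk 0 / c)" for k
  proof -
    have "integral\<^sup>L lborel (\<lambda>s. norm (u k s)) \<le> integral\<^sup>L lborel (\<lambda>s. (norm (p k) + norm (q k)) * (sincr (c * s))^4)"
      by (intro integral_mono integrable_norm uint integrable_mult_right int0 ub)
    also have "\<dots> = (norm (p k) + norm (q k)) * (Jk 0 / c)"
      using Jk_scale[OF c, of 0] by simp
    finally show ?thesis .
  qed
  have sumI: "summable (\<lambda>k. integral\<^sup>L lborel (\<lambda>s. norm (u k s)))"
  proof (rule summable_comparison_test'[where g="\<lambda>k. (norm (p k) + norm (q k)) * (Jk 0 / c)"])
    show "summable (\<lambda>k. (norm (p k) + norm (q k)) * (Jk 0 / c))" using spq by (rule summable_mult2)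
    fix n show "norm (integral\<^sup>L lborel (\<lambda>s. norm (u n s))) \<le> (norm (p n) + norm (q n)) * (Jk 0 / c)"
      using ui[of n] by (simp add: integral_nonneg_AE)
  qed
  have sumP: "AE s in lborel. summable (\<lambda>k. norm (u k s))"
  proof (rule AE_I2)
    fix s
    show "summable (\<lambda>k. norm (u k s))"
      by (rule summable_comparison_test'[OF summable_mult2[OF spq, of "(sincr (c * s))^4"]])
         (use ub in auto)
  qed
  have Phi_int: "integrable lborel (\<lambda>s. \<Sum>k. u k s)"
    by (rule integrable_suminf[OF uint sumP sumI])
  have Phi_eq: "integral\<^sup>L lborel (\<lambda>s. \<Sum>k. u k s) = (\<Sum>k. integral\<^sup>L lborel (u k))"
    by (rule integral_suminf[OF uint sumP sumI])
  have uk: "integral\<^sup>L lborel (u k) = (if k = j then p k * exp (\<i> * of_real (b k * t0)) * of_real (Jk 0 / c) else 0)" for k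
  proof -
    have "integral\<^sup>L lborel (u k) = p k * exp (\<i> * of_real (b k * t0)) * integral\<^sup>L lborel (\<kappa> (b k - b j))
        + q k * exp (\<i> * of_real (- b k * t0)) * integral\<^sup>L lborel (\<kappa> (- b k - b j))"
      unfolding u_def[abs_def] by (simp add: Tint)
    also have "integral\<^sup>L lborel (\<kappa> (- b k - b j)) = 0"
      using gap2[of k] by (intro Tz) (simp add: abs_minus_commute)
    also have "integral\<^sup>L lborel (\<kappa> (b k - b j)) = (if k = j then of_real (Jk 0 / c) else 0)"
      using T0 gap[of k] Tz by auto
    finally show ?thesis by auto
  qed
  have Ssum: "(\<Sum>k. integral\<^sup>L lborel (u k)) = p j * exp (\<i> * of_real (b j * t0)) * of_real (Jk 0 / c)"
    unfolding uk using sums_single[of j "\<lambda>k. p k * exp (\<i> * of_real (b k * t0)) * of_real (Jk 0 / c)"]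
    by (simp add: sums_iff)
  have first_int: "integrable lborel (\<lambda>s. F (t0 + s) * \<kappa> (- b j) s)"
    using Phi_int by (simp add: Fser)
  have first: "integral\<^sup>L lborel (\<lambda>s. F (t0 + s) * \<kappa> (- b j) s) = p j * exp (\<i> * of_real (b j * t0)) * of_real (Jk 0 / c)"
    using Phi_eq Ssum by (simp add: Fser)
  have second: "integral\<^sup>L lborel (\<lambda>s. F t0 * \<kappa> (- b j) s) = 0"
    using Tz[of "- b j"] gapj by simp
  have third: "integral\<^sup>L lborel (\<lambda>s. A * (complex_of_real (s * (sincr (c * s))^4) * exp (\<i> * complex_of_real (- b j * s)))) = 0"
    using T1z[of "- b j"] gapj by simp
  have pw: "(F (t0 + s) - F t0 - A * of_real s) * (of_real ((sincr (c * s))^4) * exp (\<i> * of_real (- b j * s)))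
      = F (t0 + s) * \<kappa> (- b j) s - F t0 * \<kappa> (- b j) s
        - A * (complex_of_real (s * (sincr (c * s))^4) * exp (\<i> * complex_of_real (- b j * s)))" for s
    unfolding \<kappa>_def by (simp add: algebra_simps)
  have "integral\<^sup>L lborel (\<lambda>s. (F (t0 + s) - F t0 - A * of_real s) *
            (of_real ((sincr (c * s))^4) * exp (\<i> * of_real (- b j * s))))
      = integral\<^sup>L lborel (\<lambda>s. F (t0 + s) * \<kappa> (- b j) s - F t0 * \<kappa> (- b j) s
        - A * (complex_of_real (s * (sincr (c * s))^4) * exp (\<i> * complex_of_real (- b j * s))))"
    by (simp only: pw)
  also have "\<dots> = integral\<^sup>L lborel (\<lambda>s. F (t0 + s) * \<kappa> (- b j) s) - integral\<^sup>L lborel (\<lambda>s. F t0 * \<kappa> (- b j) s)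
      - integral\<^sup>L lborel (\<lambda>s. A * (complex_of_real (s * (sincr (c * s))^4) * exp (\<i> * complex_of_real (- b j * s))))"
  proof -
    have i2: "integrable lborel (\<lambda>s. F t0 * \<kappa> (- b j) s)" by (intro integrable_mult_right Tint)
    have i3: "integrable lborel (\<lambda>s. A * (complex_of_real (s * (sincr (c * s))^4) * exp (\<i> * complex_of_real (- b j * s))))"
      by (intro integrable_mult_right T1int)
    show ?thesis
      by (subst Bochner_Integration.integral_diff[OF Bochner_Integration.integrable_diff[OF first_int i2] i3],
          subst Bochner_Integration.integral_diff[OF first_int i2], rule refl)
  qed
  also have "\<dots> = p j * exp (\<i> * of_real (b j * t0)) * of_real (Jk 0 / c)"
    unfolding first second third by simp
  finally show ?thesis .
qed



lemma key_estimate: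
  fixes p q :: "nat \<Rightarrow> complex" and b :: "nat \<Rightarrow> real" and F :: "real \<Rightarrow> complex"
  assumes c: "0 < c"
    and sp: "summable (\<lambda>k. norm (p k))" and sq: "summable (\<lambda>k. norm (q k))"
    and gap: "\<And>k. k \<noteq> j \<Longrightarrow> 4 * c \<le> \<bar>b k - b j\<bar>"
    and gap2: "\<And>k. 4 * c \<le> \<bar>b k + b j\<bar>"
    and gapj: "4 * c \<le> \<bar>b j\<bar>"
    and Fdef: "\<And>t. F t = (\<Sum>k. p k * exp (\<i> * of_real (b k * t)) + q k * exp (\<i> * of_real (- b k * t)))"
    and e: "0 \<le> \<epsilon>" and B: "0 \<le> B"
    and bnd: "\<And>s. norm (F (t0 + s) - F t0 - A * of_real s) \<le> \<epsilon> * \<bar>s\<bar> + B * s^2"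
  shows "norm (p j) * (4 * c) \<le> 4 * (\<epsilon> * Jk 1 + B * Jk 2 / c) / Jk 0"
proof -
  let ?f = "\<lambda>s. (F (t0 + s) - F t0 - A * of_real s) *
            (of_real ((sincr (c * s))^4) * exp (\<i> * of_real (- b j * s)))"
  let ?g = "\<lambda>s. \<epsilon> * (\<bar>s\<bar>^1 * (sincr (c * s))^4) + B * (\<bar>s\<bar>^2 * (sincr (c * s))^4)"
  have id: "integral\<^sup>L lborel ?f = p j * exp (\<i> * of_real (b j * t0)) * of_real (Jk 0 / c)"
    by (rule key_identity[OF c sp sq gap gap2 gapj Fdef])
  have J0: "0 < Jk 0" by (rule J0_pos)
  have "norm (integral\<^sup>L lborel ?f) = norm (p j) * (Jk 0 / c)"
    unfolding id using c J0 by (simp add: norm_mult norm_divide norm_exp_eq_Re)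
  moreover have "norm (integral\<^sup>L lborel ?f) \<le> integral\<^sup>L lborel (\<lambda>s. norm (?f s))"
    by (rule Bochner_Integration.integral_norm_bound)
  moreover have "integral\<^sup>L lborel (\<lambda>s. norm (?f s)) \<le> integral\<^sup>L lborel ?g"
  proof (rule integral_mono')
    show "integrable lborel ?g"
      using int_weight[OF c, of 1] int_weight[OF c, of 2]
      by (intro Bochner_Integration.integrable_add integrable_mult_right) auto
    fix s
    have n4: "0 \<le> (sincr (c * s))^4" by (simp add: zero_le_even_power)
    have "norm (?f s) = norm (F (t0 + s) - F t0 - A * of_real s) * (sincr (c * s))^4"
      by (simp add: norm_mult norm_power norm_exp_i power_even_abs_numeral)
    also have "\<dots> \<le> (\<epsilon> * \<bar>s\<bar> + B * s^2) * (sincr (c * s))^4"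
      by (intro mult_right_mono bnd n4)
    also have "\<dots> = ?g s" by (simp add: algebra_simps power2_abs)
    finally show "norm (?f s) \<le> ?g s" .
    show "0 \<le> ?g s" using e B n4 by (intro add_nonneg_nonneg mult_nonneg_nonneg) auto
  qed
  moreover have "integral\<^sup>L lborel ?g = \<epsilon> * (Jk 1 / c^2) + B * (Jk 2 / c^3)"
  proof -
    have "integral\<^sup>L lborel ?g = \<epsilon> * integral\<^sup>L lborel (\<lambda>s. \<bar>s\<bar>^1 * (sincr (c * s))^4)
        + B * integral\<^sup>L lborel (\<lambda>s. \<bar>s\<bar>^2 * (sincr (c * s))^4)"
      using int_weight[OF c, of 1] int_weight[OF c, of 2]
      by (subst Bochner_Integration.integral_add) (auto intro: integrable_mult_right)
    also have "\<dots> = \<epsilon> * (Jk 1 / c^2) + B * (Jk 2 / c^3)"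
      using Jk_scale[OF c, of 1] Jk_scale[OF c, of 2] by (simp add: power2_eq_square)
    finally show ?thesis .
  qed
  ultimately have est: "norm (p j) * (Jk 0 / c) \<le> \<epsilon> * (Jk 1 / c^2) + B * (Jk 2 / c^3)" by linarith
  have "c^2 * (norm (p j) * (Jk 0 / c)) \<le> c^2 * (\<epsilon> * (Jk 1 / c^2) + B * (Jk 2 / c^3))"
    using est by (intro mult_left_mono) auto
  moreover have "c^2 * (norm (p j) * (Jk 0 / c)) = norm (p j) * Jk 0 * c"
    using c by (simp add: field_simps power2_eq_square)
  moreover have "c^2 * (\<epsilon> * (Jk 1 / c^2) + B * (Jk 2 / c^3)) = \<epsilon> * Jk 1 + B * Jk 2 / c"
    using c by (simp add: field_simps power2_eq_square power3_eq_cube)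
  ultimately have "norm (p j) * Jk 0 * c \<le> \<epsilon> * Jk 1 + B * Jk 2 / c" by simp
  then have h: "norm (p j) * c \<le> (\<epsilon> * Jk 1 + B * Jk 2 / c) / Jk 0"
    using J0 by (simp add: field_simps)
  have "norm (p j) * (4 * c) = 4 * (norm (p j) * c)" by simp
  also have "\<dots> \<le> 4 * ((\<epsilon> * Jk 1 + B * Jk 2 / c) / Jk 0)" using h by linarith
  also have "\<dots> = 4 * (\<epsilon> * Jk 1 + B * Jk 2 / c) / Jk 0" by simp
  finally show ?thesis .
qed

lemma delta_facts:
  fixes b :: "nat \<Rightarrow> real"
  assumes pos: "\<And>j. 0 < b j" and mono: "strict_mono b"
  shows "0 < delta_b b j" "\<And>k. k \<noteq> j \<Longrightarrow> delta_b b j \<le> \<bar>b k - b j\<bar>"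
    "\<And>k. delta_b b j \<le> \<bar>b k + b j\<bar>" "delta_b b j \<le> \<bar>b j\<bar>"
proof -
  have sm: "b m < b n" if "m < n" for m n using mono that by (simp add: strict_mono_less)
  have le: "b m \<le> b n" if "m \<le> n" for m n using mono that by (simp add: strict_mono_less_eq)
  have d1: "delta_b b j \<le> b j - (if j = 0 then 0 else b (j - 1))" by (simp add: delta_b_def)
  have d2: "delta_b b j \<le> b (Suc j) - b j" by (simp add: delta_b_def)
  have bj: "delta_b b j \<le> b j" using d1 pos[of "j - 1"] by (auto split: if_splits)
  show "0 < delta_b b j"
    unfolding delta_b_def using pos[of j] sm[of j "Suc j"] sm[of "j - 1" j] by auto
  show "delta_b b j \<le> \<bar>b k - b j\<bar>" if "k \<noteq> j" for k
  proof (cases "k < j")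
    case True
    then have "b k \<le> b (j - 1)" by (intro le) auto
    then show ?thesis using d1 True by auto
  next
    case False
    then have "b (Suc j) \<le> b k" using that by (intro le) auto
    then show ?thesis using d2 by auto
  qed
  show "delta_b b j \<le> \<bar>b k + b j\<bar>" for k using bj pos[of k] by auto
  show "delta_b b j \<le> \<bar>b j\<bar>" using bj by auto
qed



lemma est_general:
  fixes p q :: "nat \<Rightarrow> complex" and b :: "nat \<Rightarrow> real" and F :: "real \<Rightarrow> complex"
  assumes pos: "\<And>j. 0 < b j" and mono: "strict_mono b"
    and sp: "summable (\<lambda>k. norm (p k))" and sq: "summable (\<lambda>k. norm (q k))"
    and Fdef: "\<And>t. F t = (\<Sum>k. p k * exp (\<i> * of_real (b k * t)) + q k * exp (\<i> * of_real (- b k * t)))"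
    and e: "0 \<le> \<epsilon>" and B: "0 \<le> B"
    and bnd: "\<And>s. norm (F (t0 + s) - F t0 - A * of_real s) \<le> \<epsilon> * \<bar>s\<bar> + B * s^2"
  shows "norm (p j) * delta_b b j \<le> 4 * \<epsilon> * Jk 1 / Jk 0 + 16 * B * Jk 2 / (delta_b b j * Jk 0)"
proof -
  define c where "c = delta_b b j / 4"
  have d: "0 < delta_b b j" by (rule delta_facts(1)[OF pos mono])
  then have c: "0 < c" by (simp add: c_def)
  have 4: "4 * c = delta_b b j" by (simp add: c_def)
  have "norm (p j) * (4 * c) \<le> 4 * (\<epsilon> * Jk 1 + B * Jk 2 / c) / Jk 0"
    by (rule key_estimate[OF c sp sq _ _ _ Fdef e B bnd])
       (use delta_facts[OF pos mono, where j=j] in \<open>simp_all add: 4\<close>)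
  also have "4 * (\<epsilon> * Jk 1 + B * Jk 2 / c) / Jk 0 = 4 * \<epsilon> * Jk 1 / Jk 0 + 16 * B * Jk 2 / (delta_b b j * Jk 0)"
    using d J0_pos by (simp add: c_def field_simps)
  finally show ?thesis by (simp add: 4)
qed

lemma tail_bound:
  fixes F :: "real \<Rightarrow> complex"
  assumes M: "\<And>t. norm (F t) \<le> M" and dl: "0 < \<delta>" and s: "\<delta> \<le> \<bar>s\<bar>"
  shows "norm (F (uu + s) - F uu - A * of_real s) \<le> (2 * \<bar>M\<bar> / \<delta>^2 + norm A / \<delta>) * s^2"
proof -
  have "norm (F (uu + s) - F uu - A * of_real s) \<le> norm (F (uu + s)) + norm (F uu) + norm (A * of_real s)"
  proof -
    have "norm (F (uu + s) - F uu - A * of_real s) \<le> norm (F (uu + s) - F uu) + norm (A * of_real s)"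
      by (rule norm_triangle_ineq4)
    moreover have "norm (F (uu + s) - F uu) \<le> norm (F (uu + s)) + norm (F uu)" by (rule norm_triangle_ineq4)
    ultimately show ?thesis by linarith
  qed
  also have "\<dots> \<le> 2 * \<bar>M\<bar> + norm A * \<bar>s\<bar>"
    using M[of "uu + s"] M[of uu] by (simp add: norm_mult)
  also have "2 * \<bar>M\<bar> \<le> 2 * \<bar>M\<bar> / \<delta>^2 * s^2"
  proof -
    have "\<delta>^2 \<le> \<bar>s\<bar>^2" using s dl by (intro power_mono) auto
    then have "\<delta>^2 \<le> s^2" by simp
    then have "1 \<le> s^2 / \<delta>^2" using dl by simp
    then have "2 * \<bar>M\<bar> * 1 \<le> 2 * \<bar>M\<bar> * (s^2 / \<delta>^2)" by (intro mult_left_mono) auto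
    then show ?thesis by simp
  qed
  also have "norm A * \<bar>s\<bar> \<le> norm A / \<delta> * s^2"
  proof -
    have "\<bar>s\<bar> * \<delta> \<le> \<bar>s\<bar> * \<bar>s\<bar>" using s by (intro mult_left_mono) auto
    then have "\<bar>s\<bar> \<le> s^2 / \<delta>" using dl by (simp add: field_simps power2_eq_square)
    then have "norm A * \<bar>s\<bar> \<le> norm A * (s^2 / \<delta>)" by (intro mult_left_mono) auto
    then show ?thesis by simp
  qed
  finally show ?thesis by (simp add: algebra_simps)
qed

lemma coeff_decay:
  fixes p q :: "nat \<Rightarrow> complex" and b :: "nat \<Rightarrow> real" and F :: "real \<Rightarrow> complex"
  assumes pos: "\<And>j. 0 < b j" and mono: "strict_mono b"
    and sp: "summable (\<lambda>k. norm (p k))" and sq: "summable (\<lambda>k. norm (q k))"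
    and Fdef: "\<And>t. F t = (\<Sum>k. p k * exp (\<i> * of_real (b k * t)) + q k * exp (\<i> * of_real (- b k * t)))"
    and M: "\<And>t. norm (F t) \<le> M"
    and diff: "\<And>\<epsilon>. 0 < \<epsilon> \<Longrightarrow> \<exists>\<delta>>0. \<forall>s. \<bar>s\<bar> < \<delta> \<longrightarrow> norm (F (t0 + s) - F t0 - A * of_real s) \<le> \<epsilon> * \<bar>s\<bar>"
  shows "(\<lambda>j. norm (p j) * delta_b b j) \<longlonglongrightarrow> 0"
  unfolding LIMSEQ_iff
proof (intro allI impI)
  fix r :: real assume r: "0 < r"
  define \<eta> where "\<eta> = r / 2"
  have \<eta>: "0 < \<eta>" using r by (simp add: \<eta>_def)
  have J0: "0 < Jk 0" by (rule J0_pos)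
  have J1: "0 \<le> Jk 1" "0 \<le> Jk 2" by (rule Jk_nonneg)+
  define y where "y = Jk 1 + 1"
  have ypos: "0 < y" using J1 by (simp add: y_def)
  define \<epsilon> where "\<epsilon> = \<eta> * Jk 0 / (8 * y)"
  have e: "0 < \<epsilon>" using \<eta> J0 ypos by (simp add: \<epsilon>_def)
  obtain \<delta> where dl: "0 < \<delta>" and dd: "\<And>s. \<bar>s\<bar> < \<delta> \<Longrightarrow> norm (F (t0 + s) - F t0 - A * of_real s) \<le> \<epsilon> * \<bar>s\<bar>"
    using diff[OF e] by blast
  define B where "B = 2 * \<bar>M\<bar> / \<delta>^2 + norm A / \<delta>"
  have B: "0 \<le> B" using dl by (simp add: B_def)
  have bnd: "norm (F (t0 + s) - F t0 - A * of_real s) \<le> \<epsilon> * \<bar>s\<bar> + B * s^2" for s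
  proof (cases "\<bar>s\<bar> < \<delta>")
    case True
    have "0 \<le> B * s^2" using B by simp
    then show ?thesis using dd[OF True] by linarith
  next
    case False
    have "norm (F (t0 + s) - F t0 - A * of_real s) \<le> B * s^2"
      using tail_bound[OF M dl, where s=s and uu=t0 and A=A] False by (simp add: B_def)
    moreover have "0 \<le> \<epsilon> * \<bar>s\<bar>" using e by simp
    ultimately show ?thesis by linarith
  qed
  have est: "norm (p j) * delta_b b j \<le> 4 * \<epsilon> * Jk 1 / Jk 0 + 16 * B * Jk 2 / (delta_b b j * Jk 0)" for j
    by (rule est_general[OF pos mono sp sq Fdef _ B bnd]) (use e in simp)
  have t1: "4 * \<epsilon> * Jk 1 / Jk 0 \<le> \<eta> / 2"
  proof -
    have h1: "\<epsilon> * y = \<eta> * Jk 0 / 8" unfolding \<epsilon>_def using ypos by simp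
    then have "\<epsilon> * Jk 1 + \<epsilon> = \<eta> * Jk 0 / 8" by (simp add: y_def algebra_simps)
    then have h2: "4 * \<epsilon> * Jk 1 \<le> 4 * (\<eta> * Jk 0 / 8)" using e by linarith
    have "4 * \<epsilon> * Jk 1 / Jk 0 \<le> 4 * (\<eta> * Jk 0 / 8) / Jk 0"
      using h2 J0 by (intro divide_right_mono) auto
    also have "\<dots> = \<eta> / 2" using J0 by simp
    finally show ?thesis .
  qed
  define D where "D = 32 * B * Jk 2 / (Jk 0 * \<eta>) + 1"
  have "0 \<le> 32 * B * Jk 2 / (Jk 0 * \<eta>)" using B J0 J1 \<eta> by simp
  then have D: "0 < D" by (simp add: D_def)
  have big: "norm (p j) * delta_b b j \<le> \<eta>" if "D \<le> delta_b b j" for j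
  proof -
    have dpos: "0 < delta_b b j" using that D by linarith
    have "16 * B * Jk 2 / (delta_b b j * Jk 0) \<le> 16 * B * Jk 2 / (D * Jk 0)"
      using that D J0 B J1 by (intro divide_left_mono mult_right_mono mult_nonneg_nonneg mult_pos_pos) auto
    also have "\<dots> \<le> \<eta> / 2"
    proof -
      have "32 * B * Jk 2 / (Jk 0 * \<eta>) \<le> D" by (simp add: D_def)
      then have "32 * B * Jk 2 \<le> D * (Jk 0 * \<eta>)" using J0 \<eta> by (simp add: divide_le_eq)
      then show ?thesis using J0 \<eta> D by (simp add: divide_le_eq field_simps)
    qed
    finally show ?thesis using est[of j] t1 by linarith
  qed
  have "(\<lambda>j. norm (p j)) \<longlonglongrightarrow> 0" using summable_LIMSEQ_zero[OF sp] .
  then obtain N where N: "\<And>n. n \<ge> N \<Longrightarrow> norm (norm (p n) - 0) < \<eta> / D"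
    unfolding LIMSEQ_iff using \<eta> D by (metis divide_pos_pos)
  show "\<exists>no. \<forall>n\<ge>no. norm (norm (p n) * delta_b b n - 0) < r"
  proof (intro exI allI impI)
    fix n assume n: "N \<le> n"
    have dpos: "0 < delta_b b n" by (rule delta_facts(1)[OF pos mono])
    have "norm (p n) * delta_b b n \<le> \<eta>"
    proof (cases "D \<le> delta_b b n")
      case True then show ?thesis by (rule big)
    next
      case False
      have "norm (p n) < \<eta> / D" using N[OF n] by simp
      then have "norm (p n) * D < \<eta>" using D by (simp add: field_simps)
      moreover have "norm (p n) * delta_b b n \<le> norm (p n) * D" using False by (intro mult_left_mono) auto
      ultimately show ?thesis by linarith
    qed
    then show "norm (norm (p n) * delta_b b n - 0) < r" using dpos \<eta> by (simp add: \<eta>_def abs_mult)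
  qed
qed

lemma coeff_bdd:
  fixes p q :: "nat \<Rightarrow> complex" and b :: "nat \<Rightarrow> real" and F :: "real \<Rightarrow> complex"
  assumes pos: "\<And>j. 0 < b j" and mono: "strict_mono b"
    and sp: "summable (\<lambda>k. norm (p k))" and sq: "summable (\<lambda>k. norm (q k))"
    and Fdef: "\<And>t. F t = (\<Sum>k. p k * exp (\<i> * of_real (b k * t)) + q k * exp (\<i> * of_real (- b k * t)))"
    and M: "\<And>t. norm (F t) \<le> M"
    and L: "0 \<le> L" and h: "0 < h"
    and lip: "\<And>s. \<bar>s\<bar> < h \<Longrightarrow> norm (F (t0 + s) - F t0) \<le> L * \<bar>s\<bar>"
  shows "bdd_above (range (\<lambda>j. norm (p j) * delta_b b j))"
proof -
  define B where "B = 2 * \<bar>M\<bar> / h^2 + norm (0::complex) / h"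
  have B: "0 \<le> B" using h by (simp add: B_def)
  have bnd: "norm (F (t0 + s) - F t0 - 0 * of_real s) \<le> L * \<bar>s\<bar> + B * s^2" for s
  proof (cases "\<bar>s\<bar> < h")
    case True
    then show ?thesis using lip[OF True] B by (simp add: add_increasing2)
  next
    case False
    have "norm (F (t0 + s) - F t0 - 0 * of_real s) \<le> B * s^2"
      using tail_bound[OF M h, where s=s and uu=t0 and A=0] False by (simp add: B_def)
    moreover have "0 \<le> L * \<bar>s\<bar>" using L by simp
    ultimately show ?thesis by linarith
  qed
  have J0: "0 < Jk 0" by (rule J0_pos)
  have J1: "0 \<le> Jk 1" "0 \<le> Jk 2" by (rule Jk_nonneg)+
  define K where "K = max (4 * L * Jk 1 / Jk 0 + 16 * B * Jk 2 / Jk 0) (\<Sum>k. norm (p k))"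
  have "norm (p j) * delta_b b j \<le> K" for j
  proof (cases "1 \<le> delta_b b j")
    case True
    have "norm (p j) * delta_b b j \<le> 4 * L * Jk 1 / Jk 0 + 16 * B * Jk 2 / (delta_b b j * Jk 0)"
      by (rule est_general[OF pos mono sp sq Fdef L B bnd])
    also have "16 * B * Jk 2 / (delta_b b j * Jk 0) \<le> 16 * B * Jk 2 / (1 * Jk 0)"
      using True J0 B J1 by (intro divide_left_mono mult_right_mono mult_nonneg_nonneg mult_pos_pos) auto
    finally show ?thesis unfolding K_def by simp
  next
    case False
    have "norm (p j) \<le> (\<Sum>k. norm (p k))"
      using sum_le_suminf[OF sp, of "{j}"] by simp
    moreover have "norm (p j) * delta_b b j \<le> norm (p j)"
      using False delta_facts(1)[OF pos mono, of j] by (simp add: mult_left_le)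
    ultimately show ?thesis unfolding K_def by linarith
  qed
  then show ?thesis by (intro bdd_aboveI) auto
qed



lemma diff_eps:
  fixes g :: "real \<Rightarrow> 'a::real_normed_vector"
  assumes "g differentiable (at t0)"
  shows "\<exists>D. \<forall>\<epsilon>>0. \<exists>\<delta>>0. \<forall>s. \<bar>s\<bar> < \<delta> \<longrightarrow> norm (g (t0 + s) - g t0 - s *\<^sub>R D) \<le> \<epsilon> * \<bar>s\<bar>"
proof -
  obtain D where "(g has_vector_derivative D) (at t0)"
    using assms vector_derivative_works by blast
  then have "(g has_derivative (\<lambda>x. x *\<^sub>R D)) (at t0)" by (simp add: has_vector_derivative_def)
  then have lim: "((\<lambda>y. norm (g y - g t0 - (y - t0) *\<^sub>R D) / norm (y - t0)) \<longlongrightarrow> 0) (at t0)"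
    by (simp add: has_derivative_iff_norm)
  show ?thesis
  proof (rule exI[of _ D], intro allI impI)
    fix \<epsilon> :: real assume e: "0 < \<epsilon>"
    have "eventually (\<lambda>y. dist (norm (g y - g t0 - (y - t0) *\<^sub>R D) / norm (y - t0)) 0 < \<epsilon>) (at t0)"
      using tendsto_iff[THEN iffD1, rule_format, OF lim e] .
    then obtain d where d: "0 < d"
      and dd: "\<And>y. y \<noteq> t0 \<Longrightarrow> dist y t0 < d \<Longrightarrow> dist (norm (g y - g t0 - (y - t0) *\<^sub>R D) / norm (y - t0)) 0 < \<epsilon>"
      unfolding eventually_at by blast
    show "\<exists>\<delta>>0. \<forall>s. \<bar>s\<bar> < \<delta> \<longrightarrow> norm (g (t0 + s) - g t0 - s *\<^sub>R D) \<le> \<epsilon> * \<bar>s\<bar>"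
    proof (intro exI conjI allI impI)
      show "0 < d" by (rule d)
      fix s :: real assume s: "\<bar>s\<bar> < d"
      show "norm (g (t0 + s) - g t0 - s *\<^sub>R D) \<le> \<epsilon> * \<bar>s\<bar>"
      proof (cases "s = 0")
        case True then show ?thesis by simp
      next
        case False
        have "dist (norm (g (t0 + s) - g t0 - ((t0 + s) - t0) *\<^sub>R D) / norm ((t0 + s) - t0)) 0 < \<epsilon>"
          using False s by (intro dd) (auto simp: dist_real_def)
        then have "norm (g (t0 + s) - g t0 - s *\<^sub>R D) / \<bar>s\<bar> < \<epsilon>" by simp
        then show ?thesis using False by (simp add: divide_less_eq less_imp_le mult.commute)
      qed
    qed
  qed
qed

lemma both_conclusions:
  fixes p q a :: "nat \<Rightarrow> complex" and b :: "nat \<Rightarrow> real" and F :: "real \<Rightarrow> complex"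
  assumes pos: "\<And>j. 0 < b j" and mono: "strict_mono b"
    and sp: "summable (\<lambda>k. norm (p k))" and sq: "summable (\<lambda>k. norm (q k))"
    and Fdef: "\<And>t. F t = (\<Sum>k. p k * exp (\<i> * of_real (b k * t)) + q k * exp (\<i> * of_real (- b k * t)))"
    and M: "\<And>t. norm (F t) \<le> M"
    and pa: "\<And>j. norm (p j) = \<kappa> * norm (a j)" and k: "0 < \<kappa>"
  shows "(\<forall>\<epsilon>>0. \<exists>\<delta>>0. \<forall>s. \<bar>s\<bar> < \<delta> \<longrightarrow> norm (F (u + s) - F u - A * of_real s) \<le> \<epsilon> * \<bar>s\<bar>)
           \<Longrightarrow> (\<lambda>j. a j * complex_of_real (delta_b b j)) \<longlonglongrightarrow> 0"
    and "0 \<le> L \<Longrightarrow> 0 < h \<Longrightarrow> (\<forall>s. \<bar>s\<bar> < h \<longrightarrow> norm (F (u + s) - F u) \<le> L * \<bar>s\<bar>)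
           \<Longrightarrow> bdd_above (range (\<lambda>j. norm (a j) * delta_b b j))"
proof -
  assume d: "\<forall>\<epsilon>>0. \<exists>\<delta>>0. \<forall>s. \<bar>s\<bar> < \<delta> \<longrightarrow> norm (F (u + s) - F u - A * of_real s) \<le> \<epsilon> * \<bar>s\<bar>"
  have "(\<lambda>j. norm (p j) * delta_b b j) \<longlonglongrightarrow> 0"
    by (rule coeff_decay[OF pos mono sp sq Fdef M]) (use d in blast)
  then have "(\<lambda>j. (1 / \<kappa>) * (norm (p j) * delta_b b j)) \<longlonglongrightarrow> (1 / \<kappa>) * 0"
    by (intro tendsto_mult tendsto_const)
  moreover have "(1 / \<kappa>) * (norm (p j) * delta_b b j) = norm (a j * complex_of_real (delta_b b j))" for j
    using k delta_facts(1)[OF pos mono, of j] by (simp add: pa norm_mult)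
  ultimately have "(\<lambda>j. norm (a j * complex_of_real (delta_b b j))) \<longlonglongrightarrow> 0" by simp
  then show "(\<lambda>j. a j * complex_of_real (delta_b b j)) \<longlonglongrightarrow> 0"
    by (simp only: tendsto_norm_zero_iff)
next
  assume L: "0 \<le> L" and h: "0 < h" and l: "\<forall>s. \<bar>s\<bar> < h \<longrightarrow> norm (F (u + s) - F u) \<le> L * \<bar>s\<bar>"
  have "bdd_above (range (\<lambda>j. norm (p j) * delta_b b j))"
    by (rule coeff_bdd[OF pos mono sp sq Fdef M L h]) (use l in blast)
  then obtain K where K: "\<And>j. norm (p j) * delta_b b j \<le> K" by (auto simp: bdd_above_def)
  have "norm (a j) * delta_b b j \<le> K / \<kappa>" for j
    using K[of j] k by (simp add: pa field_simps)
  then show "bdd_above (range (\<lambda>j. norm (a j) * delta_b b j))" by (intro bdd_aboveI) auto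
qed



lemma re_repr:
  fixes w :: "nat \<Rightarrow> complex"
  assumes "w sums z"
  shows "(\<lambda>k. (w k + cnj (w k)) / 2) sums complex_of_real (Re z)"
    and "(\<lambda>k. (w k - cnj (w k)) / (2 * \<i>)) sums complex_of_real (Im z)"
proof -
  have c: "(\<lambda>k. cnj (w k)) sums cnj z" using assms by (simp add: sums_cnj)
  have "(\<lambda>k. (w k + cnj (w k)) / 2) sums ((z + cnj z) / 2)"
    by (intro sums_divide sums_add assms c)
  then show "(\<lambda>k. (w k + cnj (w k)) / 2) sums complex_of_real (Re z)"
    by (simp add: complex_add_cnj)
  have "(\<lambda>k. (w k - cnj (w k)) / (2 * \<i>)) sums ((z - cnj z) / (2 * \<i>))"
    by (intro sums_divide sums_diff assms c)
  moreover have eq: "(z - cnj z) / (2 * \<i>) = complex_of_real (Im z)"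
    by (simp add: complex_eq_iff Re_divide Im_divide power2_eq_square)
  ultimately show "(\<lambda>k. (w k - cnj (w k)) / (2 * \<i>)) sums complex_of_real (Im z)"
    by (simp only: eq)
qed

lemma cnj_term: "cnj (x * exp (\<i> * complex_of_real (y * t))) = cnj x * exp (\<i> * complex_of_real (- y * t))"
  by (simp add: exp_cnj)

theorem theorem3p1:
  fixes a :: "nat \<Rightarrow> complex" and b :: "nat \<Rightarrow> real" and f :: "real \<Rightarrow> complex"
  assumes abs_sum: "summable (\<lambda>j. norm (a j))"
    and b_pos: "\<And>j. b j > 0"
    and b_mono: "strict_mono b"
    and b_inf: "filterlim b at_top sequentially"
    and not_zero: "\<not> ((\<lambda>j. a j * complex_of_real (delta_b b j)) \<longlonglongrightarrow> 0)"
    and f_def: "\<And>t. f t = (\<Sum>j. a j * exp (\<i> * complex_of_real (b j * t)))"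
  shows "bounded (range f) \<and> continuous_on UNIV f \<and> (\<forall>t. \<not> f differentiable (at t))
       \<and> bounded (range (\<lambda>t. Re (f t))) \<and> continuous_on UNIV (\<lambda>t. Re (f t))
       \<and> (\<forall>t. \<not> (\<lambda>t. Re (f t)) differentiable (at t))
       \<and> bounded (range (\<lambda>t. Im (f t))) \<and> continuous_on UNIV (\<lambda>t. Im (f t))
       \<and> (\<forall>t. \<not> (\<lambda>t. Im (f t)) differentiable (at t))
       \<and> (\<not> bdd_above (range (\<lambda>j. norm (a j) * delta_b b j)) \<longrightarrow>
            (\<forall>t0. \<not> lipschitz_at f t0 \<and> \<not> lipschitz_at (\<lambda>t. Re (f t)) t0
                  \<and> \<not> lipschitz_at (\<lambda>t. Im (f t)) t0))"
proof -
  define S where "S = (\<Sum>j. norm (a j))"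
  define w where "w t j = a j * exp (\<i> * complex_of_real (b j * t))" for t j
  have nw: "norm (w t j) = norm (a j)" for t j by (simp add: w_def norm_mult norm_exp_i)
  have ws: "summable (w t)" for t
    by (rule summable_comparison_test'[OF abs_sum]) (simp add: nw)
  have wsum: "w t sums f t" for t using ws[of t] by (simp add: f_def w_def[abs_def] summable_sums)
  have fb: "norm (f t) \<le> S" for t
  proof -
    have "norm (f t) = norm (\<Sum>j. w t j)" by (simp add: f_def w_def)
    also have "\<dots> \<le> (\<Sum>j. norm (w t j))" by (rule summable_norm) (simp add: nw abs_sum)
    also have "\<dots> = S" by (simp add: nw S_def)
    finally show ?thesis .
  qed
  have reb: "\<bar>Re (f t)\<bar> \<le> S" for t using abs_Re_le_cmod[of "f t"] fb[of t] by linarith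
  have imb: "\<bar>Im (f t)\<bar> \<le> S" for t using abs_Im_le_cmod[of "f t"] fb[of t] by linarith
  have bd1: "bounded (range f)" unfolding bounded_iff using fb by blast
  have bd2: "bounded (range (\<lambda>t. Re (f t)))" unfolding bounded_iff using reb by auto
  have bd3: "bounded (range (\<lambda>t. Im (f t)))" unfolding bounded_iff using imb by auto
  have cont: "continuous_on UNIV f"
  proof -
    have ul: "uniform_limit UNIV (\<lambda>n x. \<Sum>i<n. w x i) (\<lambda>x. \<Sum>i. w x i) sequentially"
      by (rule Weierstrass_m_test[OF _ abs_sum]) (simp add: nw)
    have "continuous_on UNIV (\<lambda>x. \<Sum>i. w x i)"
    proof (rule uniform_limit_theorem[OF _ ul])
      show "\<forall>\<^sub>F n in sequentially. continuous_on UNIV (\<lambda>x. \<Sum>i<n. w x i)"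
        by (intro always_eventually allI) (unfold w_def, intro continuous_intros)
    qed simp
    moreover have "(\<lambda>x. \<Sum>i. w x i) = f" by (simp add: fun_eq_iff f_def w_def)
    ultimately show ?thesis by metis
  qed
  have cont2: "continuous_on UNIV (\<lambda>t. Re (f t))" using cont by (intro continuous_intros)
  have cont3: "continuous_on UNIV (\<lambda>t. Im (f t))" using cont by (intro continuous_intros)
  have sa2: "summable (\<lambda>k. norm (a k / 2))" using summable_divide[OF abs_sum, of 2] by (simp add: norm_divide)
  have sc2: "summable (\<lambda>k. norm (cnj (a k) / 2))" using summable_divide[OF abs_sum, of 2] by (simp add: norm_divide)
  have sa2i: "summable (\<lambda>k. norm (a k / (2 * \<i>)))" using summable_divide[OF abs_sum, of 2] by (simp add: norm_divide norm_mult)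
  have sc2i: "summable (\<lambda>k. norm (- cnj (a k) / (2 * \<i>)))" using summable_divide[OF abs_sum, of 2] by (simp add: norm_divide norm_mult)
  have s0: "summable (\<lambda>k. norm (0::complex))" by simp
  have F1: "f t = (\<Sum>k. a k * exp (\<i> * of_real (b k * t)) + 0 * exp (\<i> * of_real (- b k * t)))" for t
    by (simp add: f_def)
  have F2: "complex_of_real (Re (f t)) = (\<Sum>k. a k / 2 * exp (\<i> * of_real (b k * t)) + cnj (a k) / 2 * exp (\<i> * of_real (- b k * t)))" for t
  proof -
    have "(\<lambda>k. (w t k + cnj (w t k)) / 2) sums complex_of_real (Re (f t))" by (rule re_repr(1)[OF wsum])
    moreover have "(\<lambda>k. (w t k + cnj (w t k)) / 2) = (\<lambda>k. a k / 2 * exp (\<i> * of_real (b k * t)) + cnj (a k) / 2 * exp (\<i> * of_real (- b k * t)))"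
      unfolding w_def cnj_term by (simp add: fun_eq_iff field_simps)
    ultimately show ?thesis by (simp add: sums_iff)
  qed
  have F3: "complex_of_real (Im (f t)) = (\<Sum>k. a k / (2 * \<i>) * exp (\<i> * of_real (b k * t)) + - cnj (a k) / (2 * \<i>) * exp (\<i> * of_real (- b k * t)))" for t
  proof -
    have "(\<lambda>k. (w t k - cnj (w t k)) / (2 * \<i>)) sums complex_of_real (Im (f t))" by (rule re_repr(2)[OF wsum])
    moreover have "(\<lambda>k. (w t k - cnj (w t k)) / (2 * \<i>)) = (\<lambda>k. a k / (2 * \<i>) * exp (\<i> * of_real (b k * t)) + - cnj (a k) / (2 * \<i>) * exp (\<i> * of_real (- b k * t)))"
      unfolding w_def cnj_term by (simp add: fun_eq_iff field_simps)
    ultimately show ?thesis by (simp add: sums_iff)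
  qed
  have M2: "norm (complex_of_real (Re (f t))) \<le> S" for t using reb[of t] by simp
  have M3: "norm (complex_of_real (Im (f t))) \<le> S" for t using imb[of t] by simp
  note C1 = both_conclusions[OF b_pos b_mono abs_sum s0 F1 fb, where \<kappa>=1 and a=a]
  note C2 = both_conclusions[OF b_pos b_mono sa2 sc2 F2 M2, where \<kappa>="1/2" and a=a]
  note C3 = both_conclusions[OF b_pos b_mono sa2i sc2i F3 M3, where \<kappa>="1/2" and a=a]
  have nd1: "\<not> f differentiable (at t)" for t
  proof
    assume "f differentiable (at t)"
    then obtain D where D: "\<forall>\<epsilon>>0. \<exists>\<delta>>0. \<forall>s. \<bar>s\<bar> < \<delta> \<longrightarrow> norm (f (t + s) - f t - s *\<^sub>R D) \<le> \<epsilon> * \<bar>s\<bar>"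
      using diff_eps by blast
    have "(\<lambda>j. a j * complex_of_real (delta_b b j)) \<longlonglongrightarrow> 0"
    proof (rule C1(1)[where A=D and u=t])
      have eqs: "\<And>s. s *\<^sub>R D = D * of_real s" by (simp add: scaleR_conv_of_real mult.commute)
      show "\<forall>\<epsilon>>0. \<exists>\<delta>>0. \<forall>s. \<bar>s\<bar> < \<delta> \<longrightarrow> norm (f (t + s) - f t - D * of_real s) \<le> \<epsilon> * \<bar>s\<bar>"
        using D by (simp only: eqs)
    qed simp_all
    with not_zero show False by blast
  qed
  have nd2: "\<not> (\<lambda>t. Re (f t)) differentiable (at t)" for t
  proof
    assume "(\<lambda>t. Re (f t)) differentiable (at t)"
    then obtain D where D: "\<forall>\<epsilon>>0. \<exists>\<delta>>0. \<forall>s. \<bar>s\<bar> < \<delta> \<longrightarrow> norm (Re (f (t + s)) - Re (f t) - s *\<^sub>R D) \<le> \<epsilon> * \<bar>s\<bar>"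
      using diff_eps[of "\<lambda>t. Re (f t)"] by blast
    have "(\<lambda>j. a j * complex_of_real (delta_b b j)) \<longlonglongrightarrow> 0"
    proof (rule C2(1)[where A="of_real D" and u=t])
      show "\<forall>\<epsilon>>0. \<exists>\<delta>>0. \<forall>s. \<bar>s\<bar> < \<delta> \<longrightarrow> norm (complex_of_real (Re (f (t + s))) - complex_of_real (Re (f t)) - of_real D * of_real s) \<le> \<epsilon> * \<bar>s\<bar>"
      proof (intro allI impI)
        fix \<epsilon> :: real assume "0 < \<epsilon>"
        then obtain \<delta> where "\<delta> > 0" "\<forall>s. \<bar>s\<bar> < \<delta> \<longrightarrow> norm (Re (f (t + s)) - Re (f t) - s *\<^sub>R D) \<le> \<epsilon> * \<bar>s\<bar>"
          using D by blast
        moreover have "norm (complex_of_real (Re (f (t + s))) - complex_of_real (Re (f t)) - of_real D * of_real s)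
            = norm (Re (f (t + s)) - Re (f t) - s *\<^sub>R D)" for s
        proof -
          have "complex_of_real (Re (f (t + s))) - complex_of_real (Re (f t)) - of_real D * of_real s
              = complex_of_real (Re (f (t + s)) - Re (f t) - s *\<^sub>R D)" by (simp add: algebra_simps)
          then show ?thesis by (simp only: norm_of_real real_norm_def)
        qed
        ultimately show "\<exists>\<delta>>0. \<forall>s. \<bar>s\<bar> < \<delta> \<longrightarrow> norm (complex_of_real (Re (f (t + s))) - complex_of_real (Re (f t)) - of_real D * of_real s) \<le> \<epsilon> * \<bar>s\<bar>"
          by auto
      qed
    qed simp_all
    with not_zero show False by blast
  qed
  have nd3: "\<not> (\<lambda>t. Im (f t)) differentiable (at t)" for t
  proof
    assume "(\<lambda>t. Im (f t)) differentiable (at t)"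
    then obtain D where D: "\<forall>\<epsilon>>0. \<exists>\<delta>>0. \<forall>s. \<bar>s\<bar> < \<delta> \<longrightarrow> norm (Im (f (t + s)) - Im (f t) - s *\<^sub>R D) \<le> \<epsilon> * \<bar>s\<bar>"
      using diff_eps[of "\<lambda>t. Im (f t)"] by blast
    have "(\<lambda>j. a j * complex_of_real (delta_b b j)) \<longlonglongrightarrow> 0"
    proof (rule C3(1)[where A="of_real D" and u=t])
      show "\<forall>\<epsilon>>0. \<exists>\<delta>>0. \<forall>s. \<bar>s\<bar> < \<delta> \<longrightarrow> norm (complex_of_real (Im (f (t + s))) - complex_of_real (Im (f t)) - of_real D * of_real s) \<le> \<epsilon> * \<bar>s\<bar>"
      proof (intro allI impI)
        fix \<epsilon> :: real assume "0 < \<epsilon>"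
        then obtain \<delta> where "\<delta> > 0" "\<forall>s. \<bar>s\<bar> < \<delta> \<longrightarrow> norm (Im (f (t + s)) - Im (f t) - s *\<^sub>R D) \<le> \<epsilon> * \<bar>s\<bar>"
          using D by blast
        moreover have "norm (complex_of_real (Im (f (t + s))) - complex_of_real (Im (f t)) - of_real D * of_real s)
            = norm (Im (f (t + s)) - Im (f t) - s *\<^sub>R D)" for s
        proof -
          have "complex_of_real (Im (f (t + s))) - complex_of_real (Im (f t)) - of_real D * of_real s
              = complex_of_real (Im (f (t + s)) - Im (f t) - s *\<^sub>R D)" by (simp add: algebra_simps)
          then show ?thesis by (simp only: norm_of_real real_norm_def)
        qed
        ultimately show "\<exists>\<delta>>0. \<forall>s. \<bar>s\<bar> < \<delta> \<longrightarrow> norm (complex_of_real (Im (f (t + s))) - complex_of_real (Im (f t)) - of_real D * of_real s) \<le> \<epsilon> * \<bar>s\<bar>"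
          by auto
      qed
    qed (simp_all add: norm_divide norm_mult)
    with not_zero show False by blast
  qed
  have lip: "\<not> lipschitz_at f t0 \<and> \<not> lipschitz_at (\<lambda>t. Re (f t)) t0 \<and> \<not> lipschitz_at (\<lambda>t. Im (f t)) t0"
    if nb: "\<not> bdd_above (range (\<lambda>j. norm (a j) * delta_b b j))" for t0
  proof (intro conjI notI)
    assume "lipschitz_at f t0"
    then obtain L h where L: "0 < L" "0 < h"
      and l: "\<And>t. t0 - h < t \<and> t < t0 + h \<Longrightarrow> norm (f t - f t0) \<le> L * \<bar>t - t0\<bar>"
      unfolding lipschitz_at_def by blast
    have "bdd_above (range (\<lambda>j. norm (a j) * delta_b b j))"
    proof (rule C1(2)[where L=L and h=h and u=t0])
      show "\<forall>s. \<bar>s\<bar> < h \<longrightarrow> norm (f (t0 + s) - f t0) \<le> L * \<bar>s\<bar>"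
      proof (intro allI impI)
        fix s :: real assume "\<bar>s\<bar> < h"
        then have "t0 - h < t0 + s \<and> t0 + s < t0 + h" by (simp add: abs_less_iff)
        from l[OF this] show "norm (f (t0 + s) - f t0) \<le> L * \<bar>s\<bar>" by simp
      qed
    qed (use L in simp_all)
    with nb show False by blast
  next
    assume "lipschitz_at (\<lambda>t. Re (f t)) t0"
    then obtain L h where L: "0 < L" "0 < h"
      and l: "\<And>t. t0 - h < t \<and> t < t0 + h \<Longrightarrow> norm (Re (f t) - Re (f t0)) \<le> L * \<bar>t - t0\<bar>"
      unfolding lipschitz_at_def by blast
    have "bdd_above (range (\<lambda>j. norm (a j) * delta_b b j))"
    proof (rule C2(2)[where L=L and h=h and u=t0])
      show "\<forall>s. \<bar>s\<bar> < h \<longrightarrow> norm (complex_of_real (Re (f (t0 + s))) - complex_of_real (Re (f t0))) \<le> L * \<bar>s\<bar>"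
      proof (intro allI impI)
        fix s :: real assume "\<bar>s\<bar> < h"
        then have "t0 - h < t0 + s \<and> t0 + s < t0 + h" by (simp add: abs_less_iff)
        from l[OF this] have "norm (Re (f (t0 + s)) - Re (f t0)) \<le> L * \<bar>s\<bar>" by simp
        then show "norm (complex_of_real (Re (f (t0 + s))) - complex_of_real (Re (f t0))) \<le> L * \<bar>s\<bar>"
          by (simp only: of_real_diff[symmetric] norm_of_real real_norm_def)
      qed
    qed (use L in simp_all)
    with nb show False by blast
  next
    assume "lipschitz_at (\<lambda>t. Im (f t)) t0"
    then obtain L h where L: "0 < L" "0 < h"
      and l: "\<And>t. t0 - h < t \<and> t < t0 + h \<Longrightarrow> norm (Im (f t) - Im (f t0)) \<le> L * \<bar>t - t0\<bar>"
      unfolding lipschitz_at_def by blast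
    have "bdd_above (range (\<lambda>j. norm (a j) * delta_b b j))"
    proof (rule C3(2)[where L=L and h=h and u=t0])
      show "\<forall>s. \<bar>s\<bar> < h \<longrightarrow> norm (complex_of_real (Im (f (t0 + s))) - complex_of_real (Im (f t0))) \<le> L * \<bar>s\<bar>"
      proof (intro allI impI)
        fix s :: real assume "\<bar>s\<bar> < h"
        then have "t0 - h < t0 + s \<and> t0 + s < t0 + h" by (simp add: abs_less_iff)
        from l[OF this] have "norm (Im (f (t0 + s)) - Im (f t0)) \<le> L * \<bar>s\<bar>" by simp
        then show "norm (complex_of_real (Im (f (t0 + s))) - complex_of_real (Im (f t0))) \<le> L * \<bar>s\<bar>"
          by (simp only: of_real_diff[symmetric] norm_of_real real_norm_def)
      qed
    qed (use L in \<open>simp_all add: norm_divide norm_mult\<close>)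
    with nb show False by blast
  qed
  show ?thesis using bd1 bd2 bd3 cont cont2 cont3 nd1 nd2 nd3 by (intro conjI allI impI) (simp_all add: lip)
qed


end
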